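(* Let $G=(V=[n],w)$ be a connected loopless weighted graph with $n\ge2$, and let $\gamma=\frac{\max_{1\le i\le n}\mathrm{vol}(i)}{\min_{1\le i\le n}\mathrm{vol}(i)}$. Then for every $0<\varepsilon<1$, $$\frac{\tilde h_G}{h_G}\ \ge\ \Big(1-\frac{2\gamma}{\varepsilon^2 n}\Big)(1-\varepsilon).$$ (Equivalently, since $\tilde h_G=h_{W}$ for the graphon $W$ associated to $G$ by $W(x,y)=w(i,j)$ for $x\in P_i,y\in P_j$, where $P_i$ is the $i$-th interval of the partition of $[0,1]$ into $n$ consecutive intervals of length $1/n$, the same bound holds for $h_W/h_G$.)
   Context: A weighted graph is a pair $(V,w)$ with $V=[n]$ and $w:V\times V\to[0,1]$ symmetric; it is loopless if $w(v,v)=0$ for all $v$. Put $\mathrm{vol}(v)=\sum_{u}w(u,v)$ and $\mathrm{vol}(S)=\sum_{v\in S}\mathrm{vol}(v)$. $G$ is connected if $\sum_{u\in S,v\notin S}w(u,v)>0$ for every $\emptyset\ne S\subsetneq V$. The Cheeger constant is $h_G=\min_{\emptyset\ne S\subsetneq V}\frac{\sum_{u\in S,v\notin S}w(u,v)}{\min\{\mathrm{vol}(S),\mathrm{vol}(V\setminus S)\}}$. A fractional partition of $V$ is a pair $(\rho,\eta)$ of functions $V\to[0,1]$ with $\rho+\eta\equiv1$; $\|\rho\|=\sum_u\rho(u)\mathrm{vol}(u)$, $\|\eta\|=\sum_u\eta(u)\mathrm{vol}(u)$. When both are nonzero, $\tilde h(G;\rho,\eta)=\frac{\sum_{u,v}\rho(u)\eta(v)w(u,v)}{\min\{\|\rho\|,\|\eta\|\}}$;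 the fractional Cheeger constant is $\tilde h_G=\inf\tilde h(G;\rho,\eta)$ over such fractional partitions. For a graphon $W:[0,1]^2\to[0,1]$ (measurable, symmetric), $h_W=\inf_{A:\,0<\mu_L(A)<1}\frac{\int_{A\times A^c}W}{\min\{\int_{A\times I}W,\int_{A^c\times I}W\}}$. *)

theory Defs
  imports "HOL-Analysis.Analysis"
begin

text \<open>Weighted graph on vertex set V = {0..<n} (i.e. [n] reindexed from 0),
  weight function w :: nat => nat => real.\<close>

definition weighted_graph :: "nat \<Rightarrow> (nat \<Rightarrow> nat \<Rightarrow> real) \<Rightarrow> bool" where
  "weighted_graph n w \<longleftrightarrow>
     (\<forall>u\<in>{0..<n}. \<forall>v\<in>{0..<n}. 0 \<le> w u v \<and> w u v \<le> 1 \<and> w u v = w v u)"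

definition loopless :: "nat \<Rightarrow> (nat \<Rightarrow> nat \<Rightarrow> real) \<Rightarrow> bool" where
  "loopless n w \<longleftrightarrow> (\<forall>v\<in>{0..<n}. w v v = 0)"

definition vol :: "nat \<Rightarrow> (nat \<Rightarrow> nat \<Rightarrow> real) \<Rightarrow> nat \<Rightarrow> real" where
  "vol n w v = (\<Sum>u\<in>{0..<n}. w u v)"

definition vol_set :: "nat \<Rightarrow> (nat \<Rightarrow> nat \<Rightarrow> real) \<Rightarrow> nat set \<Rightarrow> real" where
  "vol_set n w S = (\<Sum>v\<in>S. vol n w v)"

definition cut :: "nat \<Rightarrow> (nat \<Rightarrow> nat \<Rightarrow> real) \<Rightarrow> nat set \<Rightarrow> real" where
  "cut n w S = (\<Sum>u\<in>S. \<Sum>v\<in>{0..<n} - S. w u v)"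

definition connected_wg :: "nat \<Rightarrow> (nat \<Rightarrow> nat \<Rightarrow> real) \<Rightarrow> bool" where
  "connected_wg n w \<longleftrightarrow> (\<forall>S. S \<noteq> {} \<and> S \<subset> {0..<n} \<longrightarrow> cut n w S > 0)"

definition cheeger :: "nat \<Rightarrow> (nat \<Rightarrow> nat \<Rightarrow> real) \<Rightarrow> real" where
  "cheeger n w = (INF S \<in> {S. S \<noteq> {} \<and> S \<subset> {0..<n}}.
       cut n w S / min (vol_set n w S) (vol_set n w ({0..<n} - S)))"

definition frac_norm :: "nat \<Rightarrow> (nat \<Rightarrow> nat \<Rightarrow> real) \<Rightarrow> (nat \<Rightarrow> real) \<Rightarrow> real" where
  "frac_norm n w \<rho> = (\<Sum>u\<in>{0..<n}. \<rho> u * vol n w u)"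

definition fractional_partition :: "nat \<Rightarrow> (nat \<Rightarrow> real) \<Rightarrow> (nat \<Rightarrow> real) \<Rightarrow> bool" where
  "fractional_partition n \<rho> \<eta> \<longleftrightarrow>
     (\<forall>u\<in>{0..<n}. 0 \<le> \<rho> u \<and> \<rho> u \<le> 1 \<and> 0 \<le> \<eta> u \<and> \<eta> u \<le> 1 \<and> \<rho> u + \<eta> u = 1)"

definition frac_cheeger_ratio ::
  "nat \<Rightarrow> (nat \<Rightarrow> nat \<Rightarrow> real) \<Rightarrow> (nat \<Rightarrow> real) \<Rightarrow> (nat \<Rightarrow> real) \<Rightarrow> real" where
  "frac_cheeger_ratio n w \<rho> \<eta> =
     (\<Sum>u\<in>{0..<n}. \<Sum>v\<in>{0..<n}. \<rho> u * \<eta> v * w u v)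
       / min (frac_norm n w \<rho>) (frac_norm n w \<eta>)"

text \<open>Functions are only relevant on {0..<n}; the infimum ranges over all
  fractional partitions with both norms nonzero.\<close>
definition frac_cheeger :: "nat \<Rightarrow> (nat \<Rightarrow> nat \<Rightarrow> real) \<Rightarrow> real" where
  "frac_cheeger n w = (INF p \<in> {(\<rho>, \<eta>). fractional_partition n \<rho> \<eta> \<and>
        frac_norm n w \<rho> \<noteq> 0 \<and> frac_norm n w \<eta> \<noteq> 0}.
      frac_cheeger_ratio n w (fst p) (snd p))"

end

theory Submission
  imports Defs
begin

definition PP :: "nat set \<Rightarrow> (nat \<Rightarrow> real) \<Rightarrow> (nat \<Rightarrow> real) \<Rightarrow> nat set \<Rightarrow> real" where
  "PP A \<rho> \<eta> S = (\<Prod>u\<in>S. \<rho> u) * (\<Prod>u\<in>A-S. \<eta> u)"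

lemma pt1:
  fixes x a b T :: real
  assumes "a + b = T" "a < b" "0 \<le> x" "x \<le> T"
  shows "min x (T - x) \<ge> x - (x - a)^2 / (b - a)"
proof -
  have "(x - a)^2 / (b - a) \<ge> 2 * (x - T/2)" if "x \<ge> T/2"
  proof -
    have "(x-a)^2 \<ge> 2*(x-T/2)*(b-a)"
    proof -
      have "(x-a)^2 - 2*(x-T/2)*(b-a) = (x - b)^2"
        unfolding assms(1)[symmetric] by (simp add: field_simps power2_eq_square)
      thus ?thesis using zero_le_power2[of "x-b"] by linarith
    qed
    thus ?thesis using assms by (simp add: field_simps)
  qed
  moreover have "(x - a)^2 / (b - a) \<ge> 0" using assms by simp
  ultimately show ?thesis using assms by (cases "x \<ge> T/2") (auto simp: min_def)
qed

lemma pt2: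
  fixes x a b T e :: real
  assumes "a + b = T" "a \<le> b" "0 < a" "0 \<le> x" "x \<le> T" "0 < e" "e < 1"
  shows "min x (T - x) \<ge> (1 - e) * a * (1 - (x - a)^2 / (e^2 * a^2))"
proof (cases "(x-a)^2 \<ge> e^2 * a^2")
  case True
  hence "1 - (x - a)^2 / (e^2 * a^2) \<le> 0" using assms by simp
  moreover have "(1 - e) * a \<ge> 0" using assms by simp
  ultimately have "(1 - e) * a * (1 - (x - a)^2 / (e^2 * a^2)) \<le> 0"
    by (simp add: mult_nonneg_nonpos)
  then show ?thesis using assms by simp
next
  case False
  hence "(x-a)^2 < (e*a)^2" by (simp add: power_mult_distrib)
  hence "\<bar>x - a\<bar>^2 < (e*a)^2" by simp
  moreover have "0 \<le> e * a" using assms by simp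
  ultimately have "\<bar>x - a\<bar> < e * a" by (rule power_less_imp_less_base)
  hence h1: "x > (1 - e) * a" and h2: "x < a + e * a" by (auto simp: left_diff_distrib)
  have "T - x > (1 - e) * a" using h2 assms(1,2) by (simp add: left_diff_distrib)
  hence "min x (T - x) \<ge> (1 - e) * a" using h1 by simp
  moreover have "(1 - e) * a * (1 - (x - a)^2 / (e^2 * a^2)) \<le> (1 - e) * a"
    using assms by (simp add: mult_left_le)
  ultimately show ?thesis by linarith
qed


lemma key_le:
  fixes p X :: "'s \<Rightarrow> real"
  assumes fin: "finite I" and pnn: "\<forall>i\<in>I. p i \<ge> 0" and p1: "sum p I = 1"
    and EX: "(\<Sum>i\<in>I. p i * X i) = a"
    and Var: "(\<Sum>i\<in>I. p i * (X i - a)^2) \<le> M * a * b / T"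
    and ab: "a + b = T" "0 < a" "a \<le> b" and M: "0 \<le> M"
    and e: "0 < e" "e < 1" and y: "2 * M \<le> e^2 * T"
    and Xr: "\<forall>i\<in>I. 0 \<le> X i \<and> X i \<le> T"
  shows "(\<Sum>i\<in>I. p i * min (X i) (T - X i)) \<ge> (1 - 2*M/(e^2*T)) * (1 - e) * a"
proof -
  let ?V = "(\<Sum>i\<in>I. p i * (X i - a)^2)"
  have T0: "T > 0" using ab by linarith
  show ?thesis
  proof (cases "b \<ge> 2 * a")
    case True
    have "(\<Sum>i\<in>I. p i * min (X i) (T - X i)) \<ge> (\<Sum>i\<in>I. p i * (X i - (X i - a)^2 / (b - a)))"
      by (rule sum_mono) (use pt1[of a b T] ab True Xr pnn in \<open>auto intro!: mult_left_mono\<close>)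
    also have "(\<Sum>i\<in>I. p i * (X i - (X i - a)^2 / (b - a))) = a - ?V / (b - a)"
      using EX by (simp add: algebra_simps sum_subtractf sum_divide_distrib)
    finally have 1: "(\<Sum>i\<in>I. p i * min (X i) (T - X i)) \<ge> a - ?V / (b - a)" .
    have "?V / (b - a) \<le> (M * a * b / T) / (b - a)"
      using Var True ab by (intro divide_right_mono) auto
    also have "(M * a * b / T) / (b - a) \<le> 2 * M * a / T"
    proof -
      have "b \<le> 2 * (b - a)" using True by simp
      hence h: "M * a * b \<le> M * a * (2 * (b - a))" using M ab by (simp add: mult_left_mono)
      have "(2*M*a/T)*(T*(b-a)) = M * a * (2 * (b - a))" using T0 by simp
      with h have "M*a*b \<le> (2*M*a/T)*(T*(b-a))" by simp
      moreover have "T*(b-a) > 0" using T0 True ab by simp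
      ultimately show ?thesis by (simp add: pos_divide_le_eq)
    qed
    finally have 2: "(\<Sum>i\<in>I. p i * min (X i) (T - X i)) \<ge> a * (1 - 2 * M / T)"
      using 1 by (simp add: algebra_simps)
    have "2 * M / (e^2 * T) \<ge> 2 * M / T"
    proof -
      have "e^2 \<le> 1" using e by (simp add: power_le_one)
      hence "e^2 * T \<le> T" using T0 by (simp add: mult_left_le_one_le)
      moreover have "e^2 * T > 0" using e T0 by simp
      ultimately show ?thesis using M by (simp add: frac_le)
    qed
    moreover have "1 - 2 * M / (e^2 * T) \<ge> 0" using y e T0 by (simp add: field_simps)
    ultimately have "(1 - 2*M/(e^2*T)) * (1 - e) \<le> 1 - 2 * M / T"
    proof -
      have "(1 - 2*M/(e^2*T)) * (1 - e) \<le> (1 - 2*M/(e^2*T))"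
        using e \<open>1 - 2 * M / (e^2 * T) \<ge> 0\<close> by (intro mult_left_le) auto
      thus ?thesis using \<open>2 * M / (e^2 * T) \<ge> 2 * M / T\<close> by linarith
    qed
    hence "(1 - 2*M/(e^2*T)) * (1 - e) * a \<le> a * (1 - 2 * M / T)"
      using ab by (simp add: mult.commute mult_left_mono)
    with 2 show ?thesis by linarith
  next
    case False
    have "(\<Sum>i\<in>I. p i * min (X i) (T - X i)) \<ge>
        (\<Sum>i\<in>I. p i * ((1 - e) * a * (1 - (X i - a)^2 / (e^2 * a^2))))"
      by (rule sum_mono) (use pt2[of a b T _ e] ab e Xr pnn in \<open>auto intro!: mult_left_mono\<close>)
    also have "(\<Sum>i\<in>I. p i * ((1 - e) * a * (1 - (X i - a)^2 / (e^2 * a^2))))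
        = (1 - e) * a * (1 - ?V / (e^2 * a^2))"
    proof -
      have "\<And>i. p i * ((1 - e) * a * (1 - (X i - a)^2 / (e^2 * a^2))) =
         (1 - e) * a * p i - ((1 - e) * a / (e^2 * a^2)) * (p i * (X i - a)^2)"
        by (simp add: algebra_simps diff_divide_distrib)
      hence "(\<Sum>i\<in>I. p i * ((1 - e) * a * (1 - (X i - a)^2 / (e^2 * a^2))))
         = (1 - e) * a * sum p I - ((1 - e) * a / (e^2 * a^2)) * ?V"
        by (simp add: sum_subtractf sum_distrib_left)
      thus ?thesis using p1 by (simp add: algebra_simps diff_divide_distrib)
    qed
    finally have 1: "(\<Sum>i\<in>I. p i * min (X i) (T - X i)) \<ge> (1 - e) * a * (1 - ?V / (e^2 * a^2))" .
    have "?V / (e^2 * a^2) \<le> (M * a * b / T) / (e^2 * a^2)"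
      using Var e ab by (intro divide_right_mono) auto
    also have "(M * a * b / T) / (e^2 * a^2) \<le> 2 * M / (e^2 * T)"
    proof -
      have hb: "M * b \<le> M * (2 * a)" using False M by (intro mult_left_mono) auto
      have "(M * a * b / T) / (e^2 * a^2) = (M * b) / (e^2 * T * a)"
        using ab by (simp add: power2_eq_square)
      moreover have "2 * M / (e^2 * T) = (M * (2 * a)) / (e^2 * T * a)"
        using ab by simp
      moreover have "(M * b) / (e^2 * T * a) \<le> (M * (2 * a)) / (e^2 * T * a)"
        using hb e T0 ab by (intro divide_right_mono) auto
      ultimately show ?thesis by simp
    qed
    finally have "1 - ?V / (e^2 * a^2) \<ge> 1 - 2 * M / (e^2 * T)" by linarith
    hence "(1 - e) * a * (1 - ?V / (e^2 * a^2)) \<ge> (1 - e) * a * (1 - 2 * M / (e^2 * T))"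
      using e ab by (simp add: mult_left_mono)
    moreover have "(1 - 2*M/(e^2*T)) * (1 - e) * a = (1 - e) * a * (1 - 2 * M / (e^2 * T))"
      by (simp only: mult_ac)
    ultimately show ?thesis using 1 by linarith
  qed
qed


lemma marg:
  fixes \<rho> \<eta> :: "'a \<Rightarrow> real"
  assumes A: "finite A" and BA: "B \<subseteq> A" and CA: "C \<subseteq> A" and BC: "B \<inter> C = {}"
    and pe: "\<forall>u\<in>A. \<rho> u + \<eta> u = 1"
  shows "(\<Sum>S\<in>Pow A. (\<Prod>u\<in>S. \<rho> u) * (\<Prod>u\<in>A-S. \<eta> u) * (if B \<subseteq> S \<and> C \<inter> S = {} then 1 else 0))
     = (\<Prod>u\<in>B. \<rho> u) * (\<Prod>u\<in>C. \<eta> u)"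
proof -
  define f1 where "f1 u = (if u \<in> C then 0 else \<rho> u)" for u
  define f2 where "f2 u = (if u \<in> B then 0 else \<eta> u)" for u
  define g where "g u = (if u \<in> B then \<rho> u else if u \<in> C then \<eta> u else 1)" for u
  have "(\<Sum>S\<in>Pow A. (\<Prod>u\<in>S. \<rho> u) * (\<Prod>u\<in>A-S. \<eta> u) * (if B \<subseteq> S \<and> C \<inter> S = {} then 1 else 0))
      = (\<Sum>S\<in>Pow A. (\<Prod>u\<in>S. f1 u) * (\<Prod>u\<in>A-S. f2 u))"
  proof (rule sum.cong[OF refl])
    fix S assume "S \<in> Pow A"
    hence SA: "S \<subseteq> A" by simp
    hence fS: "finite S" using A finite_subset by blast
    show "(\<Prod>u\<in>S. \<rho> u) * (\<Prod>u\<in>A-S. \<eta> u) * (if B \<subseteq> S \<and> C \<inter> S = {} then 1 else 0)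
        = (\<Prod>u\<in>S. f1 u) * (\<Prod>u\<in>A-S. f2 u)"
    proof (cases "C \<inter> S = {}")
      case False
      then obtain u where "u \<in> C" "u \<in> S" by blast
      hence "(\<Prod>u\<in>S. f1 u) = 0" using fS by (intro prod_zero) (auto simp: f1_def)
      thus ?thesis using False by simp
    next
      case CS: True
      show ?thesis
      proof (cases "B \<subseteq> S")
        case False
        then obtain u where "u \<in> B" "u \<notin> S" by blast
        hence "(\<Prod>u\<in>A-S. f2 u) = 0" using A BA by (intro prod_zero) (auto simp: f2_def)
        thus ?thesis using False by simp
      next
        case True
        have "(\<Prod>u\<in>S. f1 u) = (\<Prod>u\<in>S. \<rho> u)" using CS by (intro prod.cong) (auto simp: f1_def)
        moreover have "(\<Prod>u\<in>A-S. f2 u) = (\<Prod>u\<in>A-S. \<eta> u)" using True by (intro prod.cong) (auto simp: f2_def)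
        ultimately show ?thesis using True CS by simp
      qed
    qed
  qed
  also have "\<dots> = (\<Prod>u\<in>A. f1 u + f2 u)" by (rule prod_add[OF A, symmetric])
  also have "\<dots> = (\<Prod>u\<in>A. g u)"
    using pe BC by (intro prod.cong) (auto simp: f1_def f2_def g_def)
  also have "\<dots> = (\<Prod>u\<in>B \<union> C. g u)"
    using A BA CA by (intro prod.mono_neutral_right) (auto simp: g_def)
  also have "\<dots> = (\<Prod>u\<in>B. g u) * (\<Prod>u\<in>C. g u)"
    using A BA CA BC by (intro prod.union_disjoint) (auto intro: finite_subset)
  also have "\<dots> = (\<Prod>u\<in>B. \<rho> u) * (\<Prod>u\<in>C. \<eta> u)"
    using BC by (auto simp: g_def intro!: arg_cong2[where f="(*)"] prod.cong)
  finally show ?thesis .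
qed


lemma E0:
  fixes \<rho> \<eta> :: "'a \<Rightarrow> real"
  assumes "finite A" "\<forall>u\<in>A. \<rho> u + \<eta> u = 1"
  shows "(\<Sum>S\<in>Pow A. (\<Prod>u\<in>S. \<rho> u) * (\<Prod>u\<in>A-S. \<eta> u)) = 1"
  using marg[OF assms(1) _ _ _ assms(2), of "{}" "{}"] by simp

lemma E1:
  fixes \<rho> \<eta> :: "'a \<Rightarrow> real"
  assumes "finite A" "\<forall>u\<in>A. \<rho> u + \<eta> u = 1" "u \<in> A"
  shows "(\<Sum>S\<in>Pow A. (\<Prod>u\<in>S. \<rho> u) * (\<Prod>u\<in>A-S. \<eta> u) * (if u \<in> S then 1 else 0)) = \<rho> u"
  using marg[OF assms(1) _ _ _ assms(2), of "{u}" "{}"] assms(3) by simp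

lemma E2:
  fixes \<rho> \<eta> :: "'a \<Rightarrow> real"
  assumes "finite A" "\<forall>u\<in>A. \<rho> u + \<eta> u = 1" "u \<in> A" "v \<in> A" "u \<noteq> v"
  shows "(\<Sum>S\<in>Pow A. (\<Prod>u\<in>S. \<rho> u) * (\<Prod>u\<in>A-S. \<eta> u) * (if u \<in> S \<and> v \<in> S then 1 else 0)) = \<rho> u * \<rho> v"
  using marg[OF assms(1) _ _ _ assms(2), of "{u,v}" "{}"] assms(3-5) by simp

lemma E3:
  fixes \<rho> \<eta> :: "'a \<Rightarrow> real"
  assumes "finite A" "\<forall>u\<in>A. \<rho> u + \<eta> u = 1" "u \<in> A" "v \<in> A" "u \<noteq> v"
  shows "(\<Sum>S\<in>Pow A. (\<Prod>u\<in>S. \<rho> u) * (\<Prod>u\<in>A-S. \<eta> u) * (if u \<in> S \<and> v \<notin> S then 1 else 0)) = \<rho> u * \<eta> v"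
  using marg[OF assms(1) _ _ _ assms(2), of "{u}" "{v}"] assms(3-5) by simp

lemma vol_pos:
  assumes n2: "n \<ge> 2" and wg: "weighted_graph n w" and ll: "loopless n w"
    and cn: "connected_wg n w" and u: "u < n"
  shows "vol n w u > 0"
proof -
  define v where "v = (if u = 0 then 1 else (0::nat))"
  have v: "v < n" "v \<noteq> u" using n2 u by (auto simp: v_def)
  have "{u} \<subseteq> {0..<n}" using u by simp
  moreover have "v \<in> {0..<n}" "v \<notin> {u}" using v by auto
  ultimately have "{u} \<subset> {0..<n}" by blast
  moreover have "\<forall>S. S \<noteq> {} \<and> S \<subset> {0..<n} \<longrightarrow> cut n w S > 0"
    using cn by (simp add: connected_wg_def)
  ultimately have c: "cut n w {u} > 0" by blast
  have "vol n w u = (\<Sum>v\<in>{0..<n}. w u v)"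
    unfolding vol_def using wg u by (intro sum.cong) (auto simp: weighted_graph_def)
  also have "\<dots> = w u u + (\<Sum>v\<in>{0..<n} - {u}. w u v)"
    by (rule sum.remove) (use u in auto)
  also have "\<dots> = cut n w {u}" using ll u by (simp add: cut_def loopless_def)
  finally show ?thesis using c by simp
qed

lemma vol_nonneg:
  assumes "weighted_graph n w" "u < n" shows "vol n w u \<ge> 0"
  using assms unfolding vol_def weighted_graph_def by (intro sum_nonneg) auto


lemma nonzero_divide_mult_cancel_right_real: "(y::real) \<noteq> 0 \<Longrightarrow> x / y * y = x" by simp

lemma cheeger_props:
  assumes n2: "n \<ge> 2" and wg: "weighted_graph n w" and ll: "loopless n w"
    and cn: "connected_wg n w"
  shows "cheeger n w > 0"
    and "\<forall>S \<subseteq> {0..<n}. cut n w S \<ge> cheeger n w * min (vol_set n w S) (vol_set n w ({0..<n} - S))"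
proof -
  define F where "F = {S. S \<noteq> {} \<and> S \<subset> {0..<n}}"
  define f where "f S = cut n w S / min (vol_set n w S) (vol_set n w ({0..<n} - S))" for S
  have ch: "cheeger n w = Inf (f ` F)" unfolding cheeger_def F_def f_def by simp
  have finF: "finite F" unfolding F_def
    by (rule finite_subset[of _ "Pow {0..<n}"]) auto
  have "1 \<in> {0..<n}" "1 \<notin> {0::nat}" using n2 by auto
  hence "{0} \<noteq> {0..<n}" by metis
  moreover have "{0} \<subseteq> {0..<n}" using n2 by simp
  ultimately have "{0} \<subset> {0..<n}" by (simp add: psubset_eq)
  hence "{0} \<in> F" unfolding F_def by simp
  hence neF: "f ` F \<noteq> {}" by blast
  have vs_pos: "vol_set n w S > 0" if "S \<noteq> {}" "S \<subseteq> {0..<n}" for S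
    unfolding vol_set_def
  proof (rule sum_pos)
    show "finite S" using that finite_subset by blast
    show "S \<noteq> {}" by fact
    show "\<And>i. i \<in> S \<Longrightarrow> 0 < vol n w i" using that vol_pos[OF n2 wg ll cn] by auto
  qed
  have mpos: "min (vol_set n w S) (vol_set n w ({0..<n} - S)) > 0" if "S \<in> F" for S
  proof -
    have "S \<noteq> {}" "S \<subseteq> {0..<n}" "{0..<n} - S \<noteq> {}" using that unfolding F_def by auto
    thus ?thesis using vs_pos[of S] vs_pos[of "{0..<n} - S"] by auto
  qed
  have fpos: "f S > 0" if "S \<in> F" for S
  proof -
    have "cut n w S > 0" using that cn unfolding F_def connected_wg_def by blast
    thus ?thesis using mpos[OF that] unfolding f_def by simp
  qed
  have chm: "cheeger n w = Min (f ` F)" using ch finF neF by (simp add: cInf_eq_Min)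
  show "cheeger n w > 0" using chm Min_in[of "f ` F"] finF neF fpos by auto
  show "\<forall>S \<subseteq> {0..<n}. cut n w S \<ge> cheeger n w * min (vol_set n w S) (vol_set n w ({0..<n} - S))"
  proof (intro allI impI)
    fix S assume S: "S \<subseteq> {0..<n}"
    show "cut n w S \<ge> cheeger n w * min (vol_set n w S) (vol_set n w ({0..<n} - S))"
    proof (cases "S \<in> F")
      case True
      have "cheeger n w \<le> f S" using chm finF True by simp
      hence "cheeger n w * min (vol_set n w S) (vol_set n w ({0..<n} - S))
           \<le> f S * min (vol_set n w S) (vol_set n w ({0..<n} - S))"
        using mpos[OF True] by (intro mult_right_mono) auto
      also have "\<dots> = cut n w S" unfolding f_def
        by (rule nonzero_divide_mult_cancel_right_real) (use mpos[OF True] in linarith)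
      finally show ?thesis .
    next
      case False
      hence "S = {} \<or> S = {0..<n}" using S unfolding F_def by auto
      thus ?thesis
      proof
        assume "S = {}"
        moreover have "vol_set n w {0..<n} \<ge> 0" unfolding vol_set_def
          using vol_nonneg[OF wg] by (intro sum_nonneg) auto
        ultimately show ?thesis by (simp add: cut_def vol_set_def)
      next
        assume "S = {0..<n}"
        moreover have "vol_set n w {0..<n} \<ge> 0" unfolding vol_set_def
          using vol_nonneg[OF wg] by (intro sum_nonneg) auto
        ultimately show ?thesis by (simp add: cut_def vol_set_def)
      qed
    qed
  qed
qed

lemma ind_sum:
  fixes f :: "nat \<Rightarrow> real"
  assumes "finite A" "S \<subseteq> A"
  shows "(\<Sum>u\<in>S. f u) = (\<Sum>u\<in>A. f u * (if u \<in> S then 1 else 0))"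
proof -
  have "(\<Sum>u\<in>A. f u * (if u \<in> S then 1 else 0)) = (\<Sum>u\<in>A. if u \<in> S then f u else 0)"
    by (intro sum.cong) auto
  also have "\<dots> = sum f (A \<inter> S)" by (rule sum.inter_restrict[OF assms(1), symmetric])
  also have "A \<inter> S = S" using assms(2) by blast
  finally show ?thesis by simp
qed

lemma cut_ind:
  assumes "S \<subseteq> {0..<n}"
  shows "cut n w S = (\<Sum>u\<in>{0..<n}. \<Sum>v\<in>{0..<n}. w u v * (if u \<in> S \<and> v \<notin> S then 1 else 0))"
proof -
  have "cut n w S = (\<Sum>u\<in>S. \<Sum>v\<in>{0..<n} - S. w u v)" by (simp add: cut_def)
  also have "\<dots> = (\<Sum>u\<in>S. \<Sum>v\<in>{0..<n}. w u v * (if v \<notin> S then 1 else 0))"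
  proof (rule sum.cong[OF refl])
    fix u
    have "(\<Sum>v\<in>{0..<n} - S. w u v) = (\<Sum>v\<in>{0..<n}. w u v * (if v \<in> {0..<n} - S then 1 else 0))"
      by (rule ind_sum) auto
    also have "\<dots> = (\<Sum>v\<in>{0..<n}. w u v * (if v \<notin> S then 1 else 0))"
      by (intro sum.cong) auto
    finally show "(\<Sum>v\<in>{0..<n} - S. w u v) = (\<Sum>v\<in>{0..<n}. w u v * (if v \<notin> S then 1 else 0))" .
  qed
  also have "\<dots> = (\<Sum>u\<in>{0..<n}. (\<Sum>v\<in>{0..<n}. w u v * (if v \<notin> S then 1 else 0)) * (if u \<in> S then 1 else 0))"
    by (rule ind_sum) (use assms in auto)
  also have "\<dots> = (\<Sum>u\<in>{0..<n}. \<Sum>v\<in>{0..<n}. w u v * (if u \<in> S \<and> v \<notin> S then 1 else 0))"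
    by (intro sum.cong refl) (auto simp: sum_distrib_right)
  finally show ?thesis .
qed

lemma volset_ind:
  assumes "S \<subseteq> {0..<n}"
  shows "vol_set n w S = (\<Sum>u\<in>{0..<n}. vol n w u * (if u \<in> S then 1 else 0))"
  unfolding vol_set_def by (rule ind_sum) (use assms in auto)


lemma cutsum:
  assumes ll: "loopless n w" and pe: "\<forall>u\<in>{0..<n}. \<rho> u + \<eta> u = 1"
  shows "(\<Sum>S\<in>Pow {0..<n}. PP {0..<n} \<rho> \<eta> S * cut n w S)
       = (\<Sum>u\<in>{0..<n}. \<Sum>v\<in>{0..<n}. \<rho> u * \<eta> v * w u v)"
proof -
  let ?V = "{0..<n}"
  let ?I = "\<lambda>u v S. (if u \<in> S \<and> v \<notin> S then 1 else 0::real)"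
  have "(\<Sum>S\<in>Pow ?V. PP ?V \<rho> \<eta> S * cut n w S)
      = (\<Sum>S\<in>Pow ?V. \<Sum>u\<in>?V. \<Sum>v\<in>?V. w u v * (PP ?V \<rho> \<eta> S * ?I u v S))"
  proof (rule sum.cong[OF refl])
    fix S assume "S \<in> Pow ?V"
    hence "cut n w S = (\<Sum>u\<in>?V. \<Sum>v\<in>?V. w u v * ?I u v S)" by (intro cut_ind) auto
    thus "PP ?V \<rho> \<eta> S * cut n w S = (\<Sum>u\<in>?V. \<Sum>v\<in>?V. w u v * (PP ?V \<rho> \<eta> S * ?I u v S))"
      by (simp add: sum_distrib_left mult_ac)
  qed
  also have "\<dots> = (\<Sum>u\<in>?V. \<Sum>S\<in>Pow ?V. \<Sum>v\<in>?V. w u v * (PP ?V \<rho> \<eta> S * ?I u v S))"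
    by (rule sum.swap)
  also have "\<dots> = (\<Sum>u\<in>?V. \<Sum>v\<in>?V. \<Sum>S\<in>Pow ?V. w u v * (PP ?V \<rho> \<eta> S * ?I u v S))"
    by (intro sum.cong refl sum.swap)
  also have "\<dots> = (\<Sum>u\<in>?V. \<Sum>v\<in>?V. w u v * (\<Sum>S\<in>Pow ?V. PP ?V \<rho> \<eta> S * ?I u v S))"
    by (simp add: sum_distrib_left)
  also have "\<dots> = (\<Sum>u\<in>?V. \<Sum>v\<in>?V. \<rho> u * \<eta> v * w u v)"
  proof (intro sum.cong refl)
    fix u v assume u: "u \<in> ?V" and v: "v \<in> ?V"
    show "w u v * (\<Sum>S\<in>Pow ?V. PP ?V \<rho> \<eta> S * ?I u v S) = \<rho> u * \<eta> v * w u v"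
    proof (cases "u = v")
      case True
      thus ?thesis using ll u by (simp add: loopless_def)
    next
      case False
      have "(\<Sum>S\<in>Pow ?V. PP ?V \<rho> \<eta> S * ?I u v S) = \<rho> u * \<eta> v"
        unfolding PP_def by (rule E3[OF _ pe u v False]) simp
      thus ?thesis by simp
    qed
  qed
  finally show ?thesis .
qed

lemma Xsum:
  assumes pe: "\<forall>u\<in>{0..<n}. \<rho> u + \<eta> u = 1"
  shows "(\<Sum>S\<in>Pow {0..<n}. PP {0..<n} \<rho> \<eta> S * vol_set n w S) = frac_norm n w \<rho>"
proof -
  let ?V = "{0..<n}"
  let ?I = "\<lambda>u S. (if u \<in> S then 1 else 0::real)"
  have "(\<Sum>S\<in>Pow ?V. PP ?V \<rho> \<eta> S * vol_set n w S)
      = (\<Sum>S\<in>Pow ?V. \<Sum>u\<in>?V. vol n w u * (PP ?V \<rho> \<eta> S * ?I u S))"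
  proof (rule sum.cong[OF refl])
    fix S assume "S \<in> Pow ?V"
    hence "vol_set n w S = (\<Sum>u\<in>?V. vol n w u * ?I u S)" by (intro volset_ind) auto
    thus "PP ?V \<rho> \<eta> S * vol_set n w S = (\<Sum>u\<in>?V. vol n w u * (PP ?V \<rho> \<eta> S * ?I u S))"
      by (simp add: sum_distrib_left mult_ac)
  qed
  also have "\<dots> = (\<Sum>u\<in>?V. \<Sum>S\<in>Pow ?V. vol n w u * (PP ?V \<rho> \<eta> S * ?I u S))"
    by (rule sum.swap)
  also have "\<dots> = (\<Sum>u\<in>?V. vol n w u * (\<Sum>S\<in>Pow ?V. PP ?V \<rho> \<eta> S * ?I u S))"
    by (simp add: sum_distrib_left)
  also have "\<dots> = (\<Sum>u\<in>?V. \<rho> u * vol n w u)"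
  proof (intro sum.cong refl)
    fix u assume u: "u \<in> ?V"
    have "(\<Sum>S\<in>Pow ?V. PP ?V \<rho> \<eta> S * ?I u S) = \<rho> u"
      unfolding PP_def by (rule E1[OF _ pe u]) simp
    thus "vol n w u * (\<Sum>S\<in>Pow ?V. PP ?V \<rho> \<eta> S * ?I u S) = \<rho> u * vol n w u" by simp
  qed
  finally show ?thesis by (simp add: frac_norm_def)
qed

lemma X2sum:
  assumes pe: "\<forall>u\<in>{0..<n}. \<rho> u + \<eta> u = 1"
  shows "(\<Sum>S\<in>Pow {0..<n}. PP {0..<n} \<rho> \<eta> S * (vol_set n w S)^2)
     = (frac_norm n w \<rho>)^2 + (\<Sum>u\<in>{0..<n}. (vol n w u)^2 * (\<rho> u * \<eta> u))"
proof -
  let ?V = "{0..<n}"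
  let ?I = "\<lambda>u v S. (if u \<in> S \<and> v \<in> S then 1 else 0::real)"
  have "(\<Sum>S\<in>Pow ?V. PP ?V \<rho> \<eta> S * (vol_set n w S)^2)
      = (\<Sum>S\<in>Pow ?V. \<Sum>u\<in>?V. \<Sum>v\<in>?V. vol n w u * vol n w v * (PP ?V \<rho> \<eta> S * ?I u v S))"
  proof (rule sum.cong[OF refl])
    fix S assume "S \<in> Pow ?V"
    hence "vol_set n w S = (\<Sum>u\<in>?V. vol n w u * (if u \<in> S then 1 else 0))" by (intro volset_ind) auto
    hence "(vol_set n w S)^2 = (\<Sum>u\<in>?V. vol n w u * (if u \<in> S then 1 else 0)) *
        (\<Sum>v\<in>?V. vol n w v * (if v \<in> S then 1 else 0))" by (simp add: power2_eq_square)
    also have "\<dots> = (\<Sum>u\<in>?V. \<Sum>v\<in>?V. vol n w u * vol n w v * ?I u v S)"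
      by (simp add: sum_product) (intro sum.cong refl, auto)
    finally show "PP ?V \<rho> \<eta> S * (vol_set n w S)^2 = (\<Sum>u\<in>?V. \<Sum>v\<in>?V. vol n w u * vol n w v * (PP ?V \<rho> \<eta> S * ?I u v S))"
      by (simp add: sum_distrib_left mult_ac)
  qed
  also have "\<dots> = (\<Sum>u\<in>?V. \<Sum>S\<in>Pow ?V. \<Sum>v\<in>?V. vol n w u * vol n w v * (PP ?V \<rho> \<eta> S * ?I u v S))"
    by (rule sum.swap)
  also have "\<dots> = (\<Sum>u\<in>?V. \<Sum>v\<in>?V. \<Sum>S\<in>Pow ?V. vol n w u * vol n w v * (PP ?V \<rho> \<eta> S * ?I u v S))"
    by (intro sum.cong refl sum.swap)
  also have "\<dots> = (\<Sum>u\<in>?V. \<Sum>v\<in>?V. vol n w u * vol n w v * (\<Sum>S\<in>Pow ?V. PP ?V \<rho> \<eta> S * ?I u v S))"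
    by (simp add: sum_distrib_left)
  also have "\<dots> = (\<Sum>u\<in>?V. \<Sum>v\<in>?V. (\<rho> u * vol n w u) * (\<rho> v * vol n w v) +
        (if u = v then (vol n w u)^2 * (\<rho> u * \<eta> u) else 0))"
  proof (intro sum.cong refl)
    fix u v assume u: "u \<in> ?V" and v: "v \<in> ?V"
    show "vol n w u * vol n w v * (\<Sum>S\<in>Pow ?V. PP ?V \<rho> \<eta> S * ?I u v S) =
      (\<rho> u * vol n w u) * (\<rho> v * vol n w v) + (if u = v then (vol n w u)^2 * (\<rho> u * \<eta> u) else 0)"
    proof (cases "u = v")
      case True
      have "(\<Sum>S\<in>Pow ?V. PP ?V \<rho> \<eta> S * ?I u v S) = \<rho> u"
        unfolding PP_def True by (simp add: E1[OF _ pe v])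
      have "\<rho> u + \<eta> u = 1" using pe u by blast
      hence "\<eta> u = 1 - \<rho> u" by linarith
      have "vol n w u * vol n w u * \<rho> u = (\<rho> u * vol n w u) * (\<rho> u * vol n w u) + (vol n w u)^2 * (\<rho> u * \<eta> u)"
        unfolding \<open>\<eta> u = 1 - \<rho> u\<close> by (simp add: power2_eq_square algebra_simps)
      with \<open>(\<Sum>S\<in>Pow ?V. PP ?V \<rho> \<eta> S * ?I u v S) = \<rho> u\<close> show ?thesis using True by simp
    next
      case False
      have "(\<Sum>S\<in>Pow ?V. PP ?V \<rho> \<eta> S * ?I u v S) = \<rho> u * \<rho> v"
        unfolding PP_def by (rule E2[OF _ pe u v False]) simp
      thus ?thesis using False by simp
    qed
  qed
  also have "\<dots> = (\<Sum>u\<in>?V. \<Sum>v\<in>?V. (\<rho> u * vol n w u) * (\<rho> v * vol n w v)) +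
        (\<Sum>u\<in>?V. (vol n w u)^2 * (\<rho> u * \<eta> u))"
    by (simp add: sum.distrib)
  also have "(\<Sum>u\<in>?V. \<Sum>v\<in>?V. (\<rho> u * vol n w u) * (\<rho> v * vol n w v)) = (frac_norm n w \<rho>)^2"
    by (simp add: frac_norm_def power2_eq_square sum_product)
  finally show ?thesis .
qed


lemma Varsum:
  assumes pe: "\<forall>u\<in>{0..<n}. \<rho> u + \<eta> u = 1"
  shows "(\<Sum>S\<in>Pow {0..<n}. PP {0..<n} \<rho> \<eta> S * (vol_set n w S - frac_norm n w \<rho>)^2)
     = (\<Sum>u\<in>{0..<n}. (vol n w u)^2 * (\<rho> u * \<eta> u))"
proof -
  let ?V = "{0..<n}"
  let ?a = "frac_norm n w \<rho>"
  have "(\<Sum>S\<in>Pow ?V. PP ?V \<rho> \<eta> S * (vol_set n w S - ?a)^2)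
     = (\<Sum>S\<in>Pow ?V. PP ?V \<rho> \<eta> S * (vol_set n w S)^2 - 2 * ?a * (PP ?V \<rho> \<eta> S * vol_set n w S) + ?a^2 * PP ?V \<rho> \<eta> S)"
    by (intro sum.cong refl) (simp add: power2_eq_square algebra_simps)
  also have "\<dots> = (\<Sum>S\<in>Pow ?V. PP ?V \<rho> \<eta> S * (vol_set n w S)^2) - 2 * ?a * (\<Sum>S\<in>Pow ?V. PP ?V \<rho> \<eta> S * vol_set n w S)
      + ?a^2 * (\<Sum>S\<in>Pow ?V. PP ?V \<rho> \<eta> S)"
    by (simp add: sum.distrib sum_subtractf sum_distrib_left)
  also have "(\<Sum>S\<in>Pow ?V. PP ?V \<rho> \<eta> S) = 1" unfolding PP_def by (rule E0[OF _ pe]) simp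
  finally show ?thesis using X2sum[OF pe, of w] Xsum[OF pe, of w] by (simp add: power2_eq_square)
qed

lemma CS:
  assumes pe: "\<forall>u\<in>{0..<n}. \<rho> u + \<eta> u = 1" and vn: "\<forall>u\<in>{0..<n}. vol n w u \<ge> 0"
  shows "(\<Sum>u\<in>{0..<n}. vol n w u) * (\<Sum>u\<in>{0..<n}. vol n w u * (\<rho> u * \<eta> u))
      \<le> frac_norm n w \<rho> * frac_norm n w \<eta>"
proof -
  let ?V = "{0..<n}"
  define d where "d u v = vol n w u * vol n w v * (\<eta> v * (\<rho> u - \<rho> v))" for u v
  have e: "\<eta> u = 1 - \<rho> u" if "u \<in> ?V" for u
  proof -
    have "\<rho> u + \<eta> u = 1" using pe that by blast
    thus ?thesis by linarith
  qed
  have "frac_norm n w \<rho> * frac_norm n w \<eta> - (\<Sum>u\<in>?V. vol n w u) * (\<Sum>u\<in>?V. vol n w u * (\<rho> u * \<eta> u))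
      = (\<Sum>u\<in>?V. \<Sum>v\<in>?V. (\<rho> u * vol n w u) * (\<eta> v * vol n w v)) - (\<Sum>u\<in>?V. \<Sum>v\<in>?V. vol n w u * (vol n w v * (\<rho> v * \<eta> v)))"
    by (simp add: frac_norm_def sum_product)
  also have "\<dots> = (\<Sum>u\<in>?V. \<Sum>v\<in>?V. d u v)"
    by (simp add: sum_subtractf[symmetric] d_def algebra_simps)
  finally have 1: "frac_norm n w \<rho> * frac_norm n w \<eta> - (\<Sum>u\<in>?V. vol n w u) * (\<Sum>u\<in>?V. vol n w u * (\<rho> u * \<eta> u))
      = (\<Sum>u\<in>?V. \<Sum>v\<in>?V. d u v)" .
  have "(\<Sum>u\<in>?V. \<Sum>v\<in>?V. d u v) = (\<Sum>u\<in>?V. \<Sum>v\<in>?V. d v u)" by (rule sum.swap)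
  hence "2 * (\<Sum>u\<in>?V. \<Sum>v\<in>?V. d u v) = (\<Sum>u\<in>?V. \<Sum>v\<in>?V. d u v + d v u)"
    by (simp add: sum.distrib)
  also have "\<dots> = (\<Sum>u\<in>?V. \<Sum>v\<in>?V. vol n w u * vol n w v * (\<rho> u - \<rho> v)^2)"
  proof (intro sum.cong refl)
    fix u v assume u: "u \<in> ?V" and v: "v \<in> ?V"
    show "d u v + d v u = vol n w u * vol n w v * (\<rho> u - \<rho> v)^2"
      unfolding d_def e[OF u] e[OF v] by (simp add: power2_eq_square algebra_simps)
  qed
  also have "\<dots> \<ge> 0" using vn by (intro sum_nonneg mult_nonneg_nonneg) auto
  finally have "(\<Sum>u\<in>?V. \<Sum>v\<in>?V. d u v) \<ge> 0" by simp
  with 1 show ?thesis by linarith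
qed


lemma ratio_bound:
  assumes n2: "n \<ge> 2" and wg: "weighted_graph n w" and ll: "loopless n w"
    and cn: "connected_wg n w" and fp: "fractional_partition n \<rho> \<eta>"
    and a0: "frac_norm n w \<rho> \<noteq> 0" and b0: "frac_norm n w \<eta> \<noteq> 0"
    and e: "0 < e" "e < 1"
  shows "frac_cheeger_ratio n w \<rho> \<eta> \<ge>
     (1 - 2 * (MAX i\<in>{0..<n}. vol n w i) / (e^2 * (\<Sum>i\<in>{0..<n}. vol n w i))) * (1 - e) * cheeger n w"
proof -
  define V where "V = {0..<n}"
  define M where "M = (MAX i\<in>V. vol n w i)"
  define T where "T = (\<Sum>i\<in>V. vol n w i)"
  define a where "a = frac_norm n w \<rho>"
  define b where "b = frac_norm n w \<eta>"
  define h where "h = cheeger n w"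
  define c where "c = (1 - 2 * M / (e^2 * T)) * (1 - e)"
  define P where "P = PP V \<rho> \<eta>"
  define X where "X = vol_set n w"
  have finV: "finite V" by (simp add: V_def)
  have pe: "\<forall>u\<in>V. \<rho> u + \<eta> u = 1" using fp by (simp add: fractional_partition_def V_def)
  have rn: "\<forall>u\<in>V. 0 \<le> \<rho> u \<and> 0 \<le> \<eta> u" using fp by (simp add: fractional_partition_def V_def)
  have vn: "\<forall>u\<in>V. vol n w u \<ge> 0" using vol_pos[OF n2 wg ll cn] by (auto simp: V_def less_imp_le)
  have a_nn: "a \<ge> 0" unfolding a_def frac_norm_def using rn vn V_def by (intro sum_nonneg) auto
  have b_nn: "b \<ge> 0" unfolding b_def frac_norm_def using rn vn V_def by (intro sum_nonneg) auto
  have apos: "a > 0" using a_nn a0 a_def by simp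
  have bpos: "b > 0" using b_nn b0 b_def by simp
  have abT: "a + b = T"
  proof -
    have "a + b = (\<Sum>u\<in>V. \<rho> u * vol n w u + \<eta> u * vol n w u)"
      unfolding a_def b_def frac_norm_def V_def by (simp add: sum.distrib)
    also have "\<dots> = T" unfolding T_def
    proof (intro sum.cong refl)
      fix u assume "u \<in> V"
      hence "\<rho> u + \<eta> u = 1" using pe by blast
      thus "\<rho> u * vol n w u + \<eta> u * vol n w u = vol n w u" by (simp add: distrib_right[symmetric])
    qed
    finally show ?thesis .
  qed
  have Tpos: "T > 0" using abT apos bpos by linarith
  have volM: "vol n w u \<le> M" if "u \<in> V" for u
    unfolding M_def using finV that by simp
  have "(0::nat) \<in> V" using n2 V_def by simp
  hence Mnn: "M \<ge> 0" using volM[of 0] vn by (meson order_trans)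
  have hpos: "h > 0" using cheeger_props(1)[OF n2 wg ll cn] h_def by simp
  have cutge: "cut n w S \<ge> h * min (X S) (T - X S)" if "S \<subseteq> V" for S
  proof -
    have "vol_set n w (V - S) = T - X S"
      unfolding vol_set_def T_def X_def using finV that by (simp add: sum_diff)
    moreover have "cut n w S \<ge> cheeger n w * min (vol_set n w S) (vol_set n w (V - S))"
      using cheeger_props(2)[OF n2 wg ll cn] that V_def by blast
    ultimately show ?thesis by (simp add: h_def X_def)
  qed
  have Pnn: "\<forall>S\<in>Pow V. P S \<ge> 0"
    unfolding P_def PP_def using rn by (auto intro!: mult_nonneg_nonneg prod_nonneg)
  have P1: "sum P (Pow V) = 1" unfolding P_def PP_def by (rule E0[OF finV pe])
  have PX: "(\<Sum>S\<in>Pow V. P S * X S) = a"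
    unfolding P_def X_def a_def V_def by (rule Xsum) (use pe V_def in simp)
  have Xr: "\<forall>S\<in>Pow V. 0 \<le> X S \<and> X S \<le> T"
  proof
    fix S assume "S \<in> Pow V"
    hence S: "S \<subseteq> V" by simp
    show "0 \<le> X S \<and> X S \<le> T" unfolding X_def vol_set_def T_def
      using S vn finV by (auto intro!: sum_nonneg sum_mono2)
  qed
  have Var: "(\<Sum>S\<in>Pow V. P S * (X S - a)^2) \<le> M * a * b / T"
  proof -
    have "(\<Sum>S\<in>Pow V. P S * (X S - a)^2) = (\<Sum>u\<in>V. (vol n w u)^2 * (\<rho> u * \<eta> u))"
      unfolding P_def X_def a_def V_def by (rule Varsum) (use pe V_def in simp)
    also have "\<dots> \<le> (\<Sum>u\<in>V. M * (vol n w u * (\<rho> u * \<eta> u)))"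
    proof (rule sum_mono)
      fix u assume u: "u \<in> V"
      have "0 \<le> vol n w u * (\<rho> u * \<eta> u)" using rn vn u by simp
      moreover have "vol n w u \<le> M" using volM u by simp
      ultimately have "vol n w u * (vol n w u * (\<rho> u * \<eta> u)) \<le> M * (vol n w u * (\<rho> u * \<eta> u))"
        by (simp add: mult_right_mono)
      thus "(vol n w u)^2 * (\<rho> u * \<eta> u) \<le> M * (vol n w u * (\<rho> u * \<eta> u))"
        by (simp add: power2_eq_square mult_ac)
    qed
    also have "\<dots> = M * (\<Sum>u\<in>V. vol n w u * (\<rho> u * \<eta> u))" by (simp add: sum_distrib_left)
    also have "\<dots> \<le> M * (a * b / T)"
    proof (rule mult_left_mono[OF _ Mnn])
      have "T * (\<Sum>u\<in>V. vol n w u * (\<rho> u * \<eta> u)) \<le> a * b"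
        unfolding T_def a_def b_def V_def by (rule CS) (use pe vn V_def in simp_all)
      thus "(\<Sum>u\<in>V. vol n w u * (\<rho> u * \<eta> u)) \<le> a * b / T" using Tpos
        by (simp add: pos_le_divide_eq mult.commute)
    qed
    finally show ?thesis by simp
  qed
  have Qge: "(\<Sum>S\<in>Pow V. P S * min (X S) (T - X S)) \<ge> c * min a b"
  proof (cases "2 * M \<le> e^2 * T")
    case y: True
    show ?thesis
    proof (cases "a \<le> b")
      case True
      have "(\<Sum>S\<in>Pow V. P S * min (X S) (T - X S)) \<ge> c * a"
        unfolding c_def
        by (rule key_le[OF _ Pnn P1 PX Var abT apos True Mnn e y Xr]) (simp add: finV)
      thus ?thesis using True by simp
    next
      case False
      have PX': "(\<Sum>S\<in>Pow V. P S * (T - X S)) = b"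
      proof -
        have "(\<Sum>S\<in>Pow V. P S * (T - X S)) = T * sum P (Pow V) - (\<Sum>S\<in>Pow V. P S * X S)"
          by (simp add: algebra_simps sum_subtractf sum_distrib_left)
        thus ?thesis using P1 PX abT by simp
      qed
      have Var': "(\<Sum>S\<in>Pow V. P S * ((T - X S) - b)^2) \<le> M * b * a / T"
      proof -
        have "(\<Sum>S\<in>Pow V. P S * ((T - X S) - b)^2) = (\<Sum>S\<in>Pow V. P S * (X S - a)^2)"
        proof (intro sum.cong refl)
          fix S
          have "(T - X S) - b = -(X S - a)" using abT by simp
          hence "((T - X S) - b)^2 = (X S - a)^2" by (metis power2_minus)
          thus "P S * ((T - X S) - b)^2 = P S * (X S - a)^2" by simp
        qed
        thus ?thesis using Var by (simp add: mult_ac)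
      qed
      have Xr': "\<forall>S\<in>Pow V. 0 \<le> T - X S \<and> T - X S \<le> T" using Xr by auto
      have "(\<Sum>S\<in>Pow V. P S * min (T - X S) (T - (T - X S))) \<ge> c * b"
        unfolding c_def
        by (rule key_le[OF _ Pnn P1 PX' Var' _ bpos _ Mnn e y Xr'])
           (use finV abT False in auto)
      moreover have "(\<Sum>S\<in>Pow V. P S * min (T - X S) (T - (T - X S))) = (\<Sum>S\<in>Pow V. P S * min (X S) (T - X S))"
        by (intro sum.cong refl) (simp add: min.commute)
      ultimately show ?thesis using False by simp
    qed
  next
    case False
    have "2 * M / (e^2 * T) > 1" using False e Tpos by (simp add: field_simps)
    hence "c < 0" unfolding c_def using e by (simp add: mult_neg_pos)
    hence "c * min a b \<le> 0" using apos bpos by (simp add: mult_nonpos_nonneg)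
    moreover have "(\<Sum>S\<in>Pow V. P S * min (X S) (T - X S)) \<ge> 0"
      using Pnn Xr by (intro sum_nonneg mult_nonneg_nonneg) auto
    ultimately show ?thesis by linarith
  qed
  have N: "(\<Sum>u\<in>V. \<Sum>v\<in>V. \<rho> u * \<eta> v * w u v) = (\<Sum>S\<in>Pow V. P S * cut n w S)"
    unfolding P_def V_def by (rule cutsum[symmetric, OF ll]) (use pe V_def in simp)
  also have "\<dots> \<ge> (\<Sum>S\<in>Pow V. P S * (h * min (X S) (T - X S)))"
    using Pnn cutge by (intro sum_mono mult_left_mono) auto
  also have "(\<Sum>S\<in>Pow V. P S * (h * min (X S) (T - X S))) = h * (\<Sum>S\<in>Pow V. P S * min (X S) (T - X S))"
    by (simp add: sum_distrib_left mult_ac)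
  finally have "(\<Sum>u\<in>V. \<Sum>v\<in>V. \<rho> u * \<eta> v * w u v) \<ge> h * (c * min a b)"
    using Qge hpos by (meson mult_left_mono less_imp_le order_trans)
  moreover have mpos: "min a b > 0" using apos bpos by simp
  ultimately have "(\<Sum>u\<in>V. \<Sum>v\<in>V. \<rho> u * \<eta> v * w u v) / min a b \<ge> c * h"
    by (simp add: pos_le_divide_eq mult_ac)
  thus ?thesis unfolding frac_cheeger_ratio_def c_def M_def T_def V_def h_def a_def b_def
    by simp
qed

theorem mainTheorem12:
  fixes n :: nat and w :: "nat \<Rightarrow> nat \<Rightarrow> real" and \<epsilon> :: real
  assumes "n \<ge> 2"
    and "weighted_graph n w" and "loopless n w" and "connected_wg n w"
    and "0 < \<epsilon>" and "\<epsilon> < 1"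
  defines "\<gamma> \<equiv> (MAX i \<in> {0..<n}. vol n w i) / (MIN i \<in> {0..<n}. vol n w i)"
  shows "frac_cheeger n w / cheeger n w \<ge> (1 - 2 * \<gamma> / (\<epsilon>\<^sup>2 * real n)) * (1 - \<epsilon>)"
proof -
  note n2 = assms(1) and wg = assms(2) and ll = assms(3) and cn = assms(4) and e = assms(5,6)
  define V where "V = {0..<n}"
  define M where "M = (MAX i\<in>V. vol n w i)"
  define \<mu> where "\<mu> = (MIN i\<in>V. vol n w i)"
  define T where "T = (\<Sum>i\<in>V. vol n w i)"
  define h where "h = cheeger n w"
  define c where "c = (1 - 2 * M / (\<epsilon>^2 * T)) * (1 - \<epsilon>)"
  have finV: "finite V" and neV: "V \<noteq> {}" using n2 by (auto simp: V_def)
  have vp: "vol n w u > 0" if "u \<in> V" for u using vol_pos[OF n2 wg ll cn] that V_def by simp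
  have mupos: "\<mu> > 0" unfolding \<mu>_def using Min_in[of "(\<lambda>i. vol n w i) ` V"] finV neV vp by auto
  have mule: "\<mu> \<le> vol n w u" if "u \<in> V" for u unfolding \<mu>_def using finV that by simp
  have "(0::nat) \<in> V" using n2 V_def by simp
  hence Mnn: "M \<ge> 0" unfolding M_def using finV vp
    by (meson Max_ge finite_imageI image_eqI less_imp_le order_trans)
  have Tge: "real n * \<mu> \<le> T"
  proof -
    have "(\<Sum>i\<in>V. \<mu>) \<le> T" unfolding T_def using mule by (intro sum_mono) auto
    thus ?thesis by (simp add: V_def)
  qed
  have npos: "real n > 0" using n2 by simp
  have Tpos: "T > 0" using Tge mupos npos by (smt (verit) mult_pos_pos)
  have MT: "M / T \<le> \<gamma> / real n"
  proof -
    have "\<gamma> / real n = M / (real n * \<mu>)" unfolding \<gamma>_def M_def \<mu>_def V_def by (simp add: mult.commute)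
    moreover have "M / T \<le> M / (real n * \<mu>)"
    proof (rule divide_left_mono[OF Tge Mnn])
      show "0 < T * (real n * \<mu>)" using Tpos mupos npos by simp
    qed
    ultimately show ?thesis by simp
  qed
  have cge: "(1 - 2 * \<gamma> / (\<epsilon>\<^sup>2 * real n)) * (1 - \<epsilon>) \<le> c"
  proof -
    have "2 * M / (\<epsilon>^2 * T) = (2 / \<epsilon>^2) * (M / T)" by simp
    also have "\<dots> \<le> (2 / \<epsilon>^2) * (\<gamma> / real n)" using MT e by (intro mult_left_mono) auto
    also have "\<dots> = 2 * \<gamma> / (\<epsilon>\<^sup>2 * real n)" by simp
    finally have "1 - 2 * \<gamma> / (\<epsilon>\<^sup>2 * real n) \<le> 1 - 2 * M / (\<epsilon>^2 * T)" by linarith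
    thus ?thesis unfolding c_def using e by (intro mult_right_mono) auto
  qed
  have hpos: "h > 0" using cheeger_props(1)[OF n2 wg ll cn] h_def by simp
  define Fam where "Fam = {(\<rho>, \<eta>). fractional_partition n \<rho> \<eta> \<and>
        frac_norm n w \<rho> \<noteq> 0 \<and> frac_norm n w \<eta> \<noteq> 0}"
  have fc: "frac_cheeger n w = (INF p\<in>Fam. frac_cheeger_ratio n w (fst p) (snd p))"
    unfolding frac_cheeger_def Fam_def by simp
  define \<rho>0 where "\<rho>0 u = (if u = (0::nat) then 1 else 0::real)" for u
  define \<eta>0 where "\<eta>0 u = 1 - \<rho>0 u" for u :: nat
  have "(\<rho>0, \<eta>0) \<in> Fam"
  proof -
    have "fractional_partition n \<rho>0 \<eta>0"
      unfolding fractional_partition_def \<rho>0_def \<eta>0_def by auto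
    moreover have "frac_norm n w \<rho>0 = vol n w 0"
    proof -
      have "frac_norm n w \<rho>0 = (\<Sum>u\<in>V. if u = 0 then vol n w u else 0)"
        unfolding frac_norm_def \<rho>0_def V_def by (intro sum.cong refl) auto
      also have "\<dots> = vol n w 0" using \<open>0 \<in> V\<close> finV by simp
      finally show ?thesis .
    qed
    moreover have "frac_norm n w \<eta>0 > 0"
    proof -
      have "(1::nat) \<in> V" using n2 V_def by simp
      have "\<eta>0 1 * vol n w 1 \<le> (\<Sum>u\<in>V. \<eta>0 u * vol n w u)"
        using finV \<open>1 \<in> V\<close> vp by (intro member_le_sum) (auto simp: \<eta>0_def \<rho>0_def less_imp_le)
      moreover have "\<eta>0 1 * vol n w 1 > 0" using vp \<open>1 \<in> V\<close> by (simp add: \<eta>0_def \<rho>0_def)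
      ultimately show ?thesis unfolding frac_norm_def V_def by simp
    qed
    moreover have "vol n w 0 > 0" using vp \<open>0 \<in> V\<close> by blast
    ultimately show ?thesis unfolding Fam_def by auto
  qed
  hence neF: "Fam \<noteq> {}" by blast
  have "c * h \<le> frac_cheeger n w" unfolding fc
  proof (rule cINF_greatest[OF neF])
    fix p assume "p \<in> Fam"
    then obtain \<rho> \<eta> where p: "p = (\<rho>, \<eta>)" "fractional_partition n \<rho> \<eta>"
      "frac_norm n w \<rho> \<noteq> 0" "frac_norm n w \<eta> \<noteq> 0" unfolding Fam_def by auto
    show "c * h \<le> frac_cheeger_ratio n w (fst p) (snd p)"
      using ratio_bound[OF n2 wg ll cn p(2,3,4) e] p(1)
      unfolding c_def h_def M_def T_def V_def by simp
  qed
  hence "c \<le> frac_cheeger n w / h" using hpos by (simp add: pos_le_divide_eq)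
  thus ?thesis using cge h_def by simp
qed

end
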